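(* Fix integers $M>N\geq1$, positive reals $P_1,P_2,P_r,d_{d1},d_{d2},d_{r1},d_{r2},d_{dr},\alpha$, and weights $\mu_1\in[0,1]$, $\mu_2=1-\mu_1$. With $\mathcal C(x)=\log(1+x)$ define, for $Q_1,Q_2>0$, $I_1=\mathcal{C}\big(\tfrac{P_1(M-N)}{d_{d1}^{\alpha}}+\tfrac{P_1}{(d_{r1}^{\alpha}/N)+Q_1}\big)$, $I_2=\mathcal{C}\big(\tfrac{P_1(M-N)}{d_{d1}^{\alpha}}\big)+\zeta$, $I_3=\mathcal{C}\big(\tfrac{P_2(M-N)}{d_{d2}^{\alpha}}+\tfrac{P_2}{(d_{r2}^{\alpha}/N)+Q_2}\big)$, $I_4=\mathcal{C}\big(\tfrac{P_2(M-N)}{d_{d2}^{\alpha}}\big)+\zeta$, $I_5=\mathcal{C}\big(\tfrac{P_1(M-N)}{d_{d1}^{\alpha}}\big)+\mathcal{C}\big(\tfrac{P_2(M-N)}{d_{d2}^{\alpha}}\big)+\zeta$, where $\zeta=N\mathcal{C}\big(\tfrac{P_r(M-N)}{Nd_{dr}^{\alpha}}\big)-\mathcal{C}\big(\tfrac{d_{r1}^{\alpha}}{NQ_1}\big)-\mathcal{C}\big(\tfrac{d_{r2}^{\alpha}}{NQ_2}\big)$. Consider the problem $$\max_{R_1,R_2,Q_1,Q_2}\ \mu_1R_1+\mu_2R_2\quad\text{s.t. } R_1\le\min\{I_1,I_2\},\ R_2\le\min\{I_3,I_4\},\ R_1+R_2\le I_5,\ Q_1\ge0,\ Q_2\ge0.$$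 Let $a_k=1+\frac{P_k(M-N)}{d_{dk}^{\alpha}}$, $\lambda_s=\big(1+\frac{P_r(M-N)}{Nd_{dr}^{\alpha}}\big)^N$, $A=\mu_2P_2(d_{r1}^{\alpha}/N)a_1$, $B=(\mu_1-\mu_2)P_1P_2$, $C=-\mu_1P_1(d_{r2}^{\alpha}/N)a_2\lambda_s$, $\lambda_o=(2A)^{-1}(B+\sqrt{B^2-4AC})$, $\lambda_1^*=\min\{\max\{\lambda_o,1\},\lambda_s\}$ (i.e. $\lambda_1^*=1$ if $\lambda_o<1$ and $\lambda_1^*=\lambda_s$ if $\lambda_o>\lambda_s$), and $\lambda_2^*=\lambda_s/\lambda_1^*$. Then optimal quantization noise variances for this problem are $$Q_k^*=\frac{(d_{rk}^{\alpha}/N)\,a_k+P_k}{a_k(\lambda_k^*-1)},\qquad k\in\{1,2\}.$$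
   Context: When $\lambda_k^*=1$ the formula gives $Q_k^*=+\infty$, meaning that the data stream of user $k$ is not quantized/forwarded; in that case the expressions involving $Q_k$ are understood as their limits as $Q_k\to\infty$ (i.e. $\frac{P_k}{(d_{rk}^\alpha/N)+Q_k}\to0$ and $\mathcal C(\frac{d_{rk}^\alpha}{NQ_k})\to0$), and optimality is in the sense of the supremum of the problem. These quantities arise as the achievable rate region of quantize-forward relaying with joint decoding in a massive MIMO heterogeneous network with two users, relay (small-cell base station, $N$ antennas) and destination (macro-cell base station, $M$ antennas). *)

theory Defs
  imports "HOL-Analysis.Analysis"
begin

text \<open>Capacity function C(x) = log(1+x) (natural logarithm; the base only rescales
  all rates by a common positive constant).\<close>
definition Cf :: "real \<Rightarrow> real" where
  "Cf x = ln (1 + x)"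

text \<open>The term P_k / ((d_rk^alpha / N) + Q_k), with its limit 0 at Q_k = +infinity.
  Argument dra stands for d_rk^alpha, Nr for N.\<close>
definition relay_term :: "real \<Rightarrow> real \<Rightarrow> real \<Rightarrow> ereal \<Rightarrow> real" where
  "relay_term P dra Nr Q = (if Q = \<infinity> then 0 else P / (dra / Nr + real_of_ereal Q))"

definition quant_pen :: "real \<Rightarrow> real \<Rightarrow> ereal \<Rightarrow> real" where
  "quant_pen dra Nr Q = (if Q = \<infinity> then 0 else Cf (dra / (Nr * real_of_ereal Q)))"

text \<open>Optimal value of the weighted sum-rate problem over (R1,R2) for fixed (Q1,Q2)
  (supremum in the extended reals; -infinity if infeasible).\<close>
definition qf_value ::
  "nat \<Rightarrow> nat \<Rightarrow> real \<Rightarrow> real \<Rightarrow> real \<Rightarrow> real \<Rightarrow> real \<Rightarrow> real \<Rightarrow> real \<Rightarrow> real \<Rightarrow> real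
   \<Rightarrow> real \<Rightarrow> ereal \<Rightarrow> ereal \<Rightarrow> ereal" where
  "qf_value M N P1 P2 Pr dd1 dd2 dr1 dr2 ddr \<alpha> \<mu>1 Q1 Q2 =
    (let Nr = real N; K = real M - real N; \<mu>2 = 1 - \<mu>1;
         \<zeta> = Nr * Cf (Pr * K / (Nr * ddr powr \<alpha>))
             - quant_pen (dr1 powr \<alpha>) Nr Q1 - quant_pen (dr2 powr \<alpha>) Nr Q2;
         I1 = Cf (P1 * K / dd1 powr \<alpha> + relay_term P1 (dr1 powr \<alpha>) Nr Q1);
         I2 = Cf (P1 * K / dd1 powr \<alpha>) + \<zeta>;
         I3 = Cf (P2 * K / dd2 powr \<alpha> + relay_term P2 (dr2 powr \<alpha>) Nr Q2);
         I4 = Cf (P2 * K / dd2 powr \<alpha>) + \<zeta>;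
         I5 = Cf (P1 * K / dd1 powr \<alpha>) + Cf (P2 * K / dd2 powr \<alpha>) + \<zeta>
     in SUP R \<in> {(R1, R2). R1 \<le> min I1 I2 \<and> R2 \<le> min I3 I4 \<and> R1 + R2 \<le> I5}.
          ereal (\<mu>1 * fst R + \<mu>2 * snd R))"

text \<open>lambda_1^*. Convention: when A = 0 (i.e. mu_1 = 1) the expression lambda_o = (2A)^{-1}(...)
  is read as +infinity, so lambda_1^* = lambda_s.\<close>
definition lambda1_star ::
  "nat \<Rightarrow> nat \<Rightarrow> real \<Rightarrow> real \<Rightarrow> real \<Rightarrow> real \<Rightarrow> real \<Rightarrow> real \<Rightarrow> real \<Rightarrow> real \<Rightarrow> real
   \<Rightarrow> real \<Rightarrow> real" where
  "lambda1_star M N P1 P2 Pr dd1 dd2 dr1 dr2 ddr \<alpha> \<mu>1 =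
    (let Nr = real N; K = real M - real N; \<mu>2 = 1 - \<mu>1;
         a1 = 1 + P1 * K / dd1 powr \<alpha>; a2 = 1 + P2 * K / dd2 powr \<alpha>;
         lams = (1 + Pr * K / (Nr * ddr powr \<alpha>)) ^ N;
         A = \<mu>2 * P2 * (dr1 powr \<alpha> / Nr) * a1;
         B = (\<mu>1 - \<mu>2) * P1 * P2;
         C = - \<mu>1 * P1 * (dr2 powr \<alpha> / Nr) * a2 * lams;
         lamo = inverse (2 * A) * (B + sqrt (B\<^sup>2 - 4 * A * C))
     in if A = 0 then lams else min (max lamo 1) lams)"

definition lambda_s :: "nat \<Rightarrow> nat \<Rightarrow> real \<Rightarrow> real \<Rightarrow> real \<Rightarrow> real" where
  "lambda_s M N Pr ddr \<alpha> = (1 + Pr * (real M - real N) / (real N * ddr powr \<alpha>)) ^ N"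

definition Q_star :: "nat \<Rightarrow> nat \<Rightarrow> real \<Rightarrow> real \<Rightarrow> real \<Rightarrow> real \<Rightarrow> real \<Rightarrow> ereal" where
  "Q_star M N P dd dr \<alpha> lam =
    (let a = 1 + P * (real M - real N) / dd powr \<alpha>
     in if lam = 1 then \<infinity> else ereal ((dr powr \<alpha> / real N * a + P) / (a * (lam - 1))))"

end

theory Submission
  imports Defs
begin

lemma user_bound:
  fixes a b P lam y W v :: real
  assumes a: "a > 0" and b: "b > 0" and P: "P > 0" and lam: "lam \<ge> 1" and y: "y \<ge> 0" and W: "W \<ge> 0"
    and v: "0 < v" "v \<le> 1"
    and cond: "W*a*b*lam = y*P \<or> (lam = 1 \<and> y*P \<le> W*a*b*lam)"
  shows "y * ln (a + P/b*(1-v)) + W * ln v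
     \<le> y * (ln a + ln lam + ln ((P+b*a)/(P+b*a*lam))) + W * ln ((P+b*a)/(P+b*a*lam))"
proof -
  define ws where "ws = (P+b*a)/(P+b*a*lam)"
  define X where "X = a + P/b*(1-v)"
  define Xs where "Xs = a*lam*ws"
  have E: "P+b*a*lam > 0" using a b P lam by (smt (verit) mult_pos_pos)
  have "b*a > 0" using a b by simp
  have D: "P + b*a > 0" using P \<open>b*a > 0\<close> by linarith
  have "b*a*1 \<le> b*a*lam" using \<open>b*a > 0\<close> lam by (intro mult_left_mono) auto
  then have ws: "ws > 0" "ws \<le> 1" unfolding ws_def using E D
    by (auto simp: divide_le_eq_1)
  have om: "1 - ws = b*a*(lam-1)/(P+b*a*lam)" unfolding ws_def using E by (simp add: field_simps)
  have t1: "P/b*(1-ws) = P*a*(lam-1)/(P+b*a*lam)" unfolding om using b by simp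
  have t2: "a + P*a*(lam-1)/(P+b*a*lam) = a*lam*((P+b*a)/(P+b*a*lam))"
    using E by (simp add: field_simps)
  have Xs_eq: "Xs = a + P/b*(1-ws)" unfolding t1 t2 unfolding Xs_def ws_def by simp
  have X: "X > 0" unfolding X_def using a b P v by (smt (verit) divide_pos_pos mult_nonneg_nonneg)
  have Xs: "Xs > 0" unfolding Xs_def using a lam ws by simp
  have lnXs: "ln Xs = ln a + ln lam + ln ws" unfolding Xs_def using a lam ws
    by (simp add: ln_mult)
  have h1: "ln X - ln Xs \<le> X/Xs - 1" using ln_le_minus_one[of "X/Xs"] X Xs by (simp add: ln_div)
  have h2: "ln v - ln ws \<le> v/ws - 1" using ln_le_minus_one[of "v/ws"] v ws by (simp add: ln_div)
  have "X - Xs = (a + P/b*(1-v)) - (a + P/b*(1-ws))" using Xs_eq X_def by simp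
  also have "\<dots> = -(P/b)*(v - ws)" by (simp add: algebra_simps add_divide_distrib[symmetric])
  finally have d: "X - Xs = -(P/b)*(v - ws)" .
  have e1: "X/Xs - 1 = (X - Xs)/Xs" using Xs by (simp add: field_simps)
  have key: "y*(X/Xs - 1) + W*(v/ws - 1) = (v - ws)*(W*a*b*lam - y*P)/(ws*a*b*lam)"
    unfolding e1 d unfolding Xs_def using ws a b lam
    by (simp add: field_simps)
  have "(v - ws)*(W*a*b*lam - y*P) \<le> 0"
  proof (cases "W*a*b*lam = y*P")
    case True then show ?thesis by simp
  next
    case False
    with cond have "lam = 1" "y*P \<le> W*a*b*lam" by auto
    then have "ws = 1" unfolding ws_def using E by simp
    then show ?thesis using v \<open>y*P \<le> W*a*b*lam\<close> by (simp add: mult_nonpos_nonneg)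
  qed
  then have "y*(X/Xs - 1) + W*(v/ws - 1) \<le> 0" unfolding key using ws a b lam
    by (simp add: divide_nonpos_pos)
  moreover have "y*(ln X - ln Xs) \<le> y*(X/Xs - 1)" using h1 y by (rule mult_left_mono)
  moreover have "W*(ln v - ln ws) \<le> W*(v/ws - 1)" using h2 W by (rule mult_left_mono)
  ultimately have "y*ln X + W*ln v \<le> y * ln Xs + W * ln ws" by (simp add: algebra_simps)
  then show ?thesis unfolding lnXs X_def ws_def .
qed

lemma zero_cond:
  fixes a b P lam y :: real
  assumes "a > 0" "b > 0" "P > 0" "y = 0 \<or> lam = 1"
  shows "y * (ln lam + ln ((P+b*a)/(P+b*a*lam))) = 0"
proof -
  have "P + b*a > 0" using assms by (simp add: add_pos_pos)
  then show ?thesis using assms by auto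
qed

lemma core_bound:
  fixes a1 a2 b1 b2 P1 P2 lam1 lam2 y1 y2 y3 y4 y5 \<mu>1 \<mu>2 v1 v2 R1 R2 L :: real
  assumes pos: "a1 > 0" "a2 > 0" "b1 > 0" "b2 > 0" "P1 > 0" "P2 > 0" "lam1 \<ge> 1" "lam2 \<ge> 1"
    and ys: "y1 \<ge> 0" "y2 \<ge> 0" "y3 \<ge> 0" "y4 \<ge> 0" "y5 \<ge> 0"
    and mu: "y1 + y2 + y5 = \<mu>1" "y3 + y4 + y5 = \<mu>2"
    and v: "0 < v1" "v1 \<le> 1" "0 < v2" "v2 \<le> 1"
    and c1: "(y2+y4+y5)*a1*b1*lam1 = y1*P1 \<or> (lam1 = 1 \<and> y1*P1 \<le> (y2+y4+y5)*a1*b1*lam1)"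
    and c2: "(y2+y4+y5)*a2*b2*lam2 = y3*P2 \<or> (lam2 = 1 \<and> y3*P2 \<le> (y2+y4+y5)*a2*b2*lam2)"
    and z2: "y2 = 0 \<or> lam2 = 1" and z4: "y4 = 0 \<or> lam1 = 1"
    and L: "L = ln lam1 + ln lam2"
    and f1: "R1 \<le> ln (a1 + P1/b1*(1-v1))"
    and f2: "R1 \<le> ln a1 + (L + ln v1 + ln v2)"
    and f3: "R2 \<le> ln (a2 + P2/b2*(1-v2))"
    and f4: "R2 \<le> ln a2 + (L + ln v1 + ln v2)"
    and f5: "R1 + R2 \<le> ln a1 + ln a2 + (L + ln v1 + ln v2)"
  shows "\<mu>1 * R1 + \<mu>2 * R2 \<le>
     \<mu>1 * (ln a1 + ln lam1 + ln ((P1+b1*a1)/(P1+b1*a1*lam1)))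
   + \<mu>2 * (ln a2 + ln lam2 + ln ((P2+b2*a2)/(P2+b2*a2*lam2)))"
proof -
  define W where "W = y2+y4+y5"
  define s1 where "s1 = ln ((P1+b1*a1)/(P1+b1*a1*lam1))"
  define s2 where "s2 = ln ((P2+b2*a2)/(P2+b2*a2*lam2))"
  have W: "W \<ge> 0" unfolding W_def using ys by simp
  have u1: "y1 * ln (a1 + P1/b1*(1-v1)) + W * ln v1 \<le> y1 * (ln a1 + ln lam1 + s1) + W * s1"
    unfolding s1_def by (rule user_bound) (use pos ys W v c1 in \<open>auto simp: W_def\<close>)
  have u2: "y3 * ln (a2 + P2/b2*(1-v2)) + W * ln v2 \<le> y3 * (ln a2 + ln lam2 + s2) + W * s2"
    unfolding s2_def by (rule user_bound) (use pos ys W v c2 in \<open>auto simp: W_def\<close>)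
  have zz2: "y2 * (ln lam2 + s2) = 0" unfolding s2_def by (rule zero_cond) (use pos z2 in auto)
  have zz4: "y4 * (ln lam1 + s1) = 0" unfolding s1_def by (rule zero_cond) (use pos z4 in auto)
  have "\<mu>1 * R1 + \<mu>2 * R2 = y1*R1 + y2*R1 + y3*R2 + y4*R2 + y5*(R1+R2)"
    using mu by (auto simp: algebra_simps)
  also have "\<dots> \<le> y1 * ln (a1 + P1/b1*(1-v1)) + y2 * (ln a1 + (L + ln v1 + ln v2))
      + y3 * ln (a2 + P2/b2*(1-v2)) + y4 * (ln a2 + (L + ln v1 + ln v2))
      + y5 * (ln a1 + ln a2 + (L + ln v1 + ln v2))"
    by (intro add_mono mult_left_mono f1 f2 f3 f4 f5 ys)
  also have "\<dots> = (y1 * ln (a1 + P1/b1*(1-v1)) + W * ln v1) + (y3 * ln (a2 + P2/b2*(1-v2)) + W * ln v2)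
      + y2 * (ln a1 + L) + y4 * (ln a2 + L) + y5 * (ln a1 + ln a2 + L)"
    unfolding W_def by (simp add: algebra_simps)
  also have "\<dots> \<le> (y1 * (ln a1 + ln lam1 + s1) + W * s1) + (y3 * (ln a2 + ln lam2 + s2) + W * s2)
      + y2 * (ln a1 + L) + y4 * (ln a2 + L) + y5 * (ln a1 + ln a2 + L)"
    using u1 u2 by linarith
  also have "\<dots> = \<mu>1 * (ln a1 + ln lam1 + s1) + \<mu>2 * (ln a2 + ln lam2 + s2)
      + y2 * (ln lam2 + s2) + y4 * (ln lam1 + s1)"
    unfolding W_def L mu[symmetric] by (simp add: algebra_simps)
  also have "\<dots> = \<mu>1 * (ln a1 + ln lam1 + s1) + \<mu>2 * (ln a2 + ln lam2 + s2)"
    by (simp only: zz2 zz4)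
  finally show ?thesis unfolding s1_def s2_def .
qed

definition cert :: "real \<Rightarrow> real \<Rightarrow> real \<Rightarrow> real \<Rightarrow> real \<Rightarrow> real \<Rightarrow> real \<Rightarrow> real \<Rightarrow> real \<Rightarrow> real
   \<Rightarrow> real \<Rightarrow> real \<Rightarrow> real \<Rightarrow> real \<Rightarrow> real \<Rightarrow> bool" where
  "cert a1 a2 b1 b2 P1 P2 lam1 lam2 \<mu>1 \<mu>2 y1 y2 y3 y4 y5 \<longleftrightarrow>
     y1 \<ge> 0 \<and> y2 \<ge> 0 \<and> y3 \<ge> 0 \<and> y4 \<ge> 0 \<and> y5 \<ge> 0 \<and>
     y1 + y2 + y5 = \<mu>1 \<and> y3 + y4 + y5 = \<mu>2 \<and>
     ((y2+y4+y5)*a1*b1*lam1 = y1*P1 \<or> (lam1 = 1 \<and> y1*P1 \<le> (y2+y4+y5)*a1*b1*lam1)) \<and>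
     ((y2+y4+y5)*a2*b2*lam2 = y3*P2 \<or> (lam2 = 1 \<and> y3*P2 \<le> (y2+y4+y5)*a2*b2*lam2)) \<and>
     (y2 = 0 \<or> lam2 = 1) \<and> (y4 = 0 \<or> lam1 = 1)"

lemma cert_swap:
  "cert a1 a2 b1 b2 P1 P2 lam1 lam2 \<mu>1 \<mu>2 y1 y2 y3 y4 y5 \<longleftrightarrow>
   cert a2 a1 b2 b1 P2 P1 lam2 lam1 \<mu>2 \<mu>1 y3 y4 y1 y2 y5"
  unfolding cert_def by (auto simp: algebra_simps)

lemma cert_interior:
  fixes a1 a2 b1 b2 P1 P2 lam1 lam2 \<mu>1 \<mu>2 :: real
  assumes pos: "a1 > 0" "a2 > 0" "b1 > 0" "b2 > 0" "P1 > 0" "P2 > 0" "lam1 \<ge> 1" "lam2 \<ge> 1"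
    and mu: "\<mu>1 \<ge> 0" "\<mu>2 \<ge> 0"
    and eq: "\<mu>1 * P1 * (P2 + b2*a2*lam2) = \<mu>2 * P2 * (P1 + b1*a1*lam1)"
  shows "\<exists>y1 y2 y3 y4 y5. cert a1 a2 b1 b2 P1 P2 lam1 lam2 \<mu>1 \<mu>2 y1 y2 y3 y4 y5"
proof -
  define E1 where "E1 = P1 + b1*a1*lam1"
  define E2 where "E2 = P2 + b2*a2*lam2"
  have bl1: "b1*a1*lam1 > 0" using pos by simp
  have bl2: "b2*a2*lam2 > 0" using pos by simp
  have E1: "E1 > 0" "P1 \<le> E1" unfolding E1_def using pos(5) bl1 by linarith+
  have E2: "E2 > 0" "P2 \<le> E2" unfolding E2_def using pos(6) bl2 by linarith+
  define w where "w = \<mu>1 * P1 / E1"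
  have w2: "w = \<mu>2 * P2 / E2" unfolding w_def using eq E1 E2 unfolding E1_def E2_def
    by (simp add: field_simps)
  have w0: "w \<ge> 0" unfolding w_def using mu pos E1 by simp
  have wl1: "w \<le> \<mu>1" unfolding w_def using mu pos E1
    by (simp add: divide_le_eq mult_left_mono)
  have wl2: "w \<le> \<mu>2" unfolding w2 using mu pos E2
    by (simp add: divide_le_eq mult_left_mono)
  have c1: "w*a1*b1*lam1 = (\<mu>1 - w)*P1"
  proof -
    have "w * E1 = \<mu>1 * P1" unfolding w_def using E1 by simp
    then show ?thesis unfolding E1_def by (simp add: algebra_simps)
  qed
  have c2: "w*a2*b2*lam2 = (\<mu>2 - w)*P2"
  proof -
    have "w * E2 = \<mu>2 * P2" unfolding w2 using E2 by simp
    then show ?thesis unfolding E2_def by (simp add: algebra_simps)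
  qed
  have "cert a1 a2 b1 b2 P1 P2 lam1 lam2 \<mu>1 \<mu>2 (\<mu>1 - w) 0 (\<mu>2 - w) 0 w"
    unfolding cert_def using w0 wl1 wl2 c1 c2 by simp
  then show ?thesis by blast
qed

lemma cert_edge2:
  fixes a1 a2 b1 b2 P1 P2 lam1 lam2 \<mu>1 \<mu>2 :: real
  assumes pos: "a1 > 0" "a2 > 0" "b1 > 0" "b2 > 0" "P1 > 0" "P2 > 0" "lam1 \<ge> 1" "lam2 = 1"
    and mu: "\<mu>1 \<ge> 0" "\<mu>2 \<ge> 0"
    and ineq: "\<mu>2 * P2 * (P1 + b1*a1*lam1) \<le> \<mu>1 * P1 * (P2 + b2*a2)"
  shows "\<exists>y1 y2 y3 y4 y5. cert a1 a2 b1 b2 P1 P2 lam1 lam2 \<mu>1 \<mu>2 y1 y2 y3 y4 y5"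
proof -
  define E1 where "E1 = P1 + b1*a1*lam1"
  define D2 where "D2 = P2 + b2*a2"
  have bl1: "b1*a1*lam1 > 0" using pos by simp
  have bl2: "b2*a2 > 0" using pos by simp
  have E1: "E1 > 0" "P1 \<le> E1" unfolding E1_def using pos(5) bl1 by linarith+
  have D2: "D2 > 0" unfolding D2_def using pos(6) bl2 by linarith
  define w where "w = \<mu>1 * P1 / E1"
  have w0: "w \<ge> 0" unfolding w_def using mu pos E1 by simp
  have wl1: "w \<le> \<mu>1" unfolding w_def using mu pos E1
    by (simp add: divide_le_eq mult_left_mono)
  have c1: "w*a1*b1*lam1 = (\<mu>1 - w)*P1"
  proof -
    have "w * E1 = \<mu>1 * P1" unfolding w_def using E1 by simp
    then show ?thesis unfolding E1_def by (simp add: algebra_simps)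
  qed
  have wD: "\<mu>2 * P2 \<le> w * D2"
  proof -
    have "\<mu>2 * P2 * E1 \<le> \<mu>1 * P1 * D2" using ineq unfolding E1_def D2_def .
    then have "\<mu>2 * P2 \<le> \<mu>1 * P1 * D2 / E1" using E1 by (simp add: le_divide_eq)
    then show ?thesis unfolding w_def by (simp add: algebra_simps)
  qed
  show ?thesis
  proof (cases "w \<le> \<mu>2")
    case True
    have c2: "(\<mu>2 - w) * P2 \<le> w*a2*b2*lam2"
      using wD unfolding D2_def \<open>lam2 = 1\<close> by (simp add: algebra_simps)
    have "cert a1 a2 b1 b2 P1 P2 lam1 lam2 \<mu>1 \<mu>2 (\<mu>1 - w) 0 (\<mu>2 - w) 0 w"
      unfolding cert_def using w0 wl1 True c1 c2 \<open>lam2 = 1\<close> by simp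
    then show ?thesis by blast
  next
    case False
    have c2: "0 * P2 \<le> w*a2*b2*lam2"
      using w0 pos by simp
    have c1': "(w - \<mu>2 + 0 + \<mu>2)*a1*b1*lam1 = (\<mu>1 - w)*P1" using c1 by simp
    have "cert a1 a2 b1 b2 P1 P2 lam1 lam2 \<mu>1 \<mu>2 (\<mu>1 - w) (w - \<mu>2) 0 0 \<mu>2"
      unfolding cert_def using w0 wl1 False c1' c2 \<open>lam2 = 1\<close> mu by simp
    then show ?thesis by blast
  qed
qed

lemma cert_edge1:
  fixes a1 a2 b1 b2 P1 P2 lam1 lam2 \<mu>1 \<mu>2 :: real
  assumes pos: "a1 > 0" "a2 > 0" "b1 > 0" "b2 > 0" "P1 > 0" "P2 > 0" "lam1 = 1" "lam2 \<ge> 1"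
    and mu: "\<mu>1 \<ge> 0" "\<mu>2 \<ge> 0"
    and ineq: "\<mu>1 * P1 * (P2 + b2*a2*lam2) \<le> \<mu>2 * P2 * (P1 + b1*a1)"
  shows "\<exists>y1 y2 y3 y4 y5. cert a1 a2 b1 b2 P1 P2 lam1 lam2 \<mu>1 \<mu>2 y1 y2 y3 y4 y5"
proof -
  obtain y1 y2 y3 y4 y5 where "cert a2 a1 b2 b1 P2 P1 lam2 lam1 \<mu>2 \<mu>1 y1 y2 y3 y4 y5"
    using cert_edge2[of a2 a1 b2 b1 P2 P1 lam2 lam1 \<mu>2 \<mu>1] assms by auto
  then have "cert a1 a2 b1 b2 P1 P2 lam1 lam2 \<mu>1 \<mu>2 y3 y4 y1 y2 y5" using cert_swap by metis
  then show ?thesis by blast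
qed

definition polyval :: "real \<Rightarrow> real \<Rightarrow> real \<Rightarrow> real \<Rightarrow> real \<Rightarrow> real \<Rightarrow> ereal" where
  "polyval \<mu>1 I1 I2 I3 I4 I5 = (SUP R \<in> {(R1, R2). R1 \<le> min I1 I2 \<and> R2 \<le> min I3 I4 \<and> R1 + R2 \<le> I5}.
          ereal (\<mu>1 * fst R + (1 - \<mu>1) * snd R))"

definition vq :: "real \<Rightarrow> ereal \<Rightarrow> real" where
  "vq b Q = (if Q = \<infinity> then 1 else real_of_ereal Q / (b + real_of_ereal Q))"

definition goodQ :: "ereal \<Rightarrow> bool" where
  "goodQ Q \<longleftrightarrow> Q = \<infinity> \<or> (\<exists>q>0. Q = ereal q)"

lemma vq_bounds: "b > 0 \<Longrightarrow> goodQ Q \<Longrightarrow> 0 < vq b Q \<and> vq b Q \<le> 1"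
  unfolding goodQ_def vq_def by auto

lemma relay_vq:
  assumes "dra > 0" "Nr > 0" "goodQ Q"
  shows "relay_term P dra Nr Q = P/(dra/Nr)*(1 - vq (dra/Nr) Q)"
proof -
  have b: "dra/Nr > 0" using assms by simp
  show ?thesis
  proof (cases "Q = \<infinity>")
    case True then show ?thesis unfolding relay_term_def vq_def by simp
  next
    case False
    then obtain q where q: "q > 0" "Q = ereal q" using assms(3) unfolding goodQ_def by auto
    have h: "\<And>B. B > 0 \<Longrightarrow> P/B*(1 - q/(B+q)) = P/(B+q)" using q by (simp add: field_simps)
    show ?thesis unfolding relay_term_def vq_def using q b h[OF b] by simp
  qed
qed

lemma quant_vq:
  assumes "dra > 0" "Nr > 0" "goodQ Q"
  shows "quant_pen dra Nr Q = - ln (vq (dra/Nr) Q)"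
proof -
  have b: "dra/Nr > 0" using assms by simp
  show ?thesis
  proof (cases "Q = \<infinity>")
    case True then show ?thesis unfolding quant_pen_def vq_def by simp
  next
    case False
    then obtain q where q: "q > 0" "Q = ereal q" using assms(3) unfolding goodQ_def by auto
    have h: "\<And>B. B > 0 \<Longrightarrow> ln (1 + B/q) = - ln (q/(B+q))" using q
      by (simp add: ln_div field_simps)
    have e: "dra/(Nr*q) = (dra/Nr)/q" by simp
    show ?thesis unfolding quant_pen_def vq_def Cf_def e using q b h[OF b] by simp
  qed
qed

lemma qf_value_v:
  fixes M N :: nat and P1 P2 Pr dd1 dd2 dr1 dr2 ddr \<alpha> \<mu>1 :: real
  assumes N: "1 \<le> N" and dr: "0 < dr1" "0 < dr2"
    and Q: "goodQ Q1" "goodQ Q2"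
    and a1: "a1 = 1 + P1 * (real M - real N) / dd1 powr \<alpha>"
    and a2: "a2 = 1 + P2 * (real M - real N) / dd2 powr \<alpha>"
    and b1: "b1 = dr1 powr \<alpha> / real N" and b2: "b2 = dr2 powr \<alpha> / real N"
    and L: "L = real N * Cf (Pr * (real M - real N) / (real N * ddr powr \<alpha>))"
    and v1: "v1 = vq b1 Q1" and v2: "v2 = vq b2 Q2"
  shows "qf_value M N P1 P2 Pr dd1 dd2 dr1 dr2 ddr \<alpha> \<mu>1 Q1 Q2 =
    polyval \<mu>1 (ln (a1 + P1/b1*(1-v1))) (ln a1 + (L + ln v1 + ln v2))
      (ln (a2 + P2/b2*(1-v2))) (ln a2 + (L + ln v1 + ln v2))
      (ln a1 + ln a2 + (L + ln v1 + ln v2))"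
proof -
  have Nr: "real N > 0" using N by simp
  have r1: "relay_term P1 (dr1 powr \<alpha>) (real N) Q1 = P1/b1*(1-v1)"
    unfolding b1 v1 by (rule relay_vq) (use dr Nr Q in auto)
  have r2: "relay_term P2 (dr2 powr \<alpha>) (real N) Q2 = P2/b2*(1-v2)"
    unfolding b2 v2 by (rule relay_vq) (use dr Nr Q in auto)
  have p1: "quant_pen (dr1 powr \<alpha>) (real N) Q1 = - ln v1"
    unfolding b1 v1 by (rule quant_vq) (use dr Nr Q in auto)
  have p2: "quant_pen (dr2 powr \<alpha>) (real N) Q2 = - ln v2"
    unfolding b2 v2 by (rule quant_vq) (use dr Nr Q in auto)
  show ?thesis
    unfolding qf_value_def Let_def polyval_def r1 r2 p1 p2
    unfolding Cf_def a1 a2 L by (simp add: add.assoc)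
qed

lemma polyval_le:
  assumes "\<And>R1 R2. R1 \<le> min I1 I2 \<Longrightarrow> R2 \<le> min I3 I4 \<Longrightarrow> R1 + R2 \<le> I5 \<Longrightarrow>
     \<mu>1 * R1 + (1 - \<mu>1) * R2 \<le> V"
  shows "polyval \<mu>1 I1 I2 I3 I4 I5 \<le> ereal V"
  unfolding polyval_def using assms by (auto intro!: SUP_least)

lemma polyval_ge:
  assumes "R1 \<le> min I1 I2" "R2 \<le> min I3 I4" "R1 + R2 \<le> I5"
  shows "ereal (\<mu>1 * R1 + (1 - \<mu>1) * R2) \<le> polyval \<mu>1 I1 I2 I3 I4 I5"
  unfolding polyval_def using assms by (intro SUP_upper2[of "(R1,R2)"]) auto

lemma vs_facts:
  fixes a b P lam :: real
  assumes "a > 0" "b > 0" "P > 0" "lam \<ge> 1"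
  shows "0 < (P+b*a)/(P+b*a*lam)" "(P+b*a)/(P+b*a*lam) \<le> 1"
    "ln (a + P/b*(1 - (P+b*a)/(P+b*a*lam))) = ln a + ln lam + ln ((P+b*a)/(P+b*a*lam))"
    "ln lam + ln ((P+b*a)/(P+b*a*lam)) \<ge> 0"
    "a + P/b*(1 - (P+b*a)/(P+b*a*lam)) > 0"
proof -
  define ws where "ws = (P+b*a)/(P+b*a*lam)"
  have ba: "b*a > 0" using assms by simp
  have bal: "b*a*lam > 0" using assms by simp
  have E: "P+b*a*lam > 0" using assms bal by linarith
  have D: "P + b*a > 0" using assms ba by linarith
  have "b*a*1 \<le> b*a*lam" using ba assms by (intro mult_left_mono) auto
  then have ws: "ws > 0" "ws \<le> 1" unfolding ws_def using E D
    by (auto simp: divide_le_eq_1)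
  then show "0 < (P+b*a)/(P+b*a*lam)" "(P+b*a)/(P+b*a*lam) \<le> 1" unfolding ws_def by auto
  have om: "1 - ws = b*a*(lam-1)/(P+b*a*lam)" unfolding ws_def using E by (simp add: field_simps)
  have t1: "P/b*(1-ws) = P*a*(lam-1)/(P+b*a*lam)" unfolding om using assms by simp
  have t2: "a + P*a*(lam-1)/(P+b*a*lam) = a*lam*((P+b*a)/(P+b*a*lam))"
    using E by (simp add: field_simps)
  have X: "a + P/b*(1-ws) = a*lam*ws" unfolding t1 t2 unfolding ws_def by simp
  show "ln (a + P/b*(1 - (P+b*a)/(P+b*a*lam))) = ln a + ln lam + ln ((P+b*a)/(P+b*a*lam))"
    using X ws assms unfolding ws_def[symmetric] by (simp add: ln_mult)
  show "a + P/b*(1 - (P+b*a)/(P+b*a*lam)) > 0" using X ws assms unfolding ws_def[symmetric] by simp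
  have "P*1 \<le> P*lam" using assms by (intro mult_left_mono) auto
  then have "lam * ws \<ge> 1" unfolding ws_def using E by (simp add: field_simps)
  then have "ln (lam * ws) \<ge> 0" by simp
  then show "ln lam + ln ((P+b*a)/(P+b*a*lam)) \<ge> 0" using ws assms unfolding ws_def[symmetric]
    by (simp add: ln_mult)
qed

lemma abstract_main:
  fixes a1 a2 b1 b2 P1 P2 lam1 lam2 L \<mu>1 y1 y2 y3 y4 y5 :: real
  assumes pos: "a1 > 0" "a2 > 0" "b1 > 0" "b2 > 0" "P1 > 0" "P2 > 0" "lam1 \<ge> 1" "lam2 \<ge> 1"
    and L: "L = ln lam1 + ln lam2"
    and mu: "0 \<le> \<mu>1" "\<mu>1 \<le> 1"
    and ct: "cert a1 a2 b1 b2 P1 P2 lam1 lam2 \<mu>1 (1-\<mu>1) y1 y2 y3 y4 y5"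
    and s1: "s1 = (P1+b1*a1)/(P1+b1*a1*lam1)" and s2: "s2 = (P2+b2*a2)/(P2+b2*a2*lam2)"
    and Vb: "Vb = \<mu>1*(ln a1 + ln lam1 + ln s1) + (1-\<mu>1)*(ln a2 + ln lam2 + ln s2)"
    and I: "I = (\<lambda>v1 v2. polyval \<mu>1 (ln (a1 + P1/b1*(1-v1))) (ln a1 + (L + ln v1 + ln v2))
      (ln (a2 + P2/b2*(1-v2))) (ln a2 + (L + ln v1 + ln v2))
      (ln a1 + ln a2 + (L + ln v1 + ln v2)))"
  shows "\<And>v1 v2. 0 < v1 \<Longrightarrow> v1 \<le> 1 \<Longrightarrow> 0 < v2 \<Longrightarrow> v2 \<le> 1 \<Longrightarrow> I v1 v2 \<le> ereal Vb"
    and "I s1 s2 = ereal Vb"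
    and "\<And>S. (\<And>v1 v2. 0 < v1 \<Longrightarrow> v1 < 1 \<Longrightarrow> 0 < v2 \<Longrightarrow> v2 < 1 \<Longrightarrow> I v1 v2 \<le> S)
           \<Longrightarrow> ereal Vb \<le> S"
proof -
  note vf1 = vs_facts[OF pos(1) pos(3) pos(5) pos(7), folded s1]
  note vf2 = vs_facts[OF pos(2) pos(4) pos(6) pos(8), folded s2]
  show U: "I v1 v2 \<le> ereal Vb" if v: "0 < v1" "v1 \<le> 1" "0 < v2" "v2 \<le> 1" for v1 v2
    unfolding I
  proof (rule polyval_le)
    fix R1 R2
    assume f: "R1 \<le> min (ln (a1 + P1 / b1 * (1 - v1))) (ln a1 + (L + ln v1 + ln v2))"
      "R2 \<le> min (ln (a2 + P2 / b2 * (1 - v2))) (ln a2 + (L + ln v1 + ln v2))"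
      "R1 + R2 \<le> ln a1 + ln a2 + (L + ln v1 + ln v2)"
    show "\<mu>1 * R1 + (1 - \<mu>1) * R2 \<le> Vb" unfolding Vb s1 s2
      by (rule core_bound[where ?y1.0=y1 and ?y2.0=y2 and ?y3.0=y3 and ?y4.0=y4 and ?y5.0=y5 and ?v1.0=v1 and ?v2.0=v2 and L=L])
        (use pos v f L ct in \<open>auto simp: cert_def\<close>)
  qed
  have I1s: "ln (a1 + P1/b1*(1-s1)) = ln a1 + ln lam1 + ln s1" using vf1(3) s1 by simp
  have I3s: "ln (a2 + P2/b2*(1-s2)) = ln a2 + ln lam2 + ln s2" using vf2(3) s2 by simp
  have feas: "ln a1 + ln lam1 + ln s1 \<le> min (ln (a1 + P1/b1*(1-s1))) (ln a1 + (L + ln s1 + ln s2))"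
    "ln a2 + ln lam2 + ln s2 \<le> min (ln (a2 + P2/b2*(1-s2))) (ln a2 + (L + ln s1 + ln s2))"
    "(ln a1 + ln lam1 + ln s1) + (ln a2 + ln lam2 + ln s2) \<le> ln a1 + ln a2 + (L + ln s1 + ln s2)"
    using I1s I3s vf1(4) vf2(4) L by auto
  have "ereal Vb \<le> I s1 s2" unfolding I Vb by (rule polyval_ge[OF feas])
  moreover have "I s1 s2 \<le> ereal Vb" using U vf1(1,2) vf2(1,2) by auto
  ultimately show "I s1 s2 = ereal Vb" by simp
  show "ereal Vb \<le> S" if H: "\<And>v1 v2. 0 < v1 \<Longrightarrow> v1 < 1 \<Longrightarrow> 0 < v2 \<Longrightarrow> v2 < 1 \<Longrightarrow> I v1 v2 \<le> S" for S
  proof -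
    define t where "t = (\<lambda>n::nat. real (Suc n) / real (Suc (Suc n)))"
    have t: "t \<longlonglongrightarrow> 1" unfolding t_def using LIMSEQ_Suc[OF LIMSEQ_n_over_Suc_n[where 'a=real]] by simp
    have t01: "0 < t n" "t n < 1" for n unfolding t_def by auto
    define F where "F = (\<lambda>v1 v2. let r1 = min (ln (a1 + P1/b1*(1-v1))) (ln a1 + (L + ln v1 + ln v2)) in
        \<mu>1 * r1 + (1-\<mu>1) * min (min (ln (a2 + P2/b2*(1-v2))) (ln a2 + (L + ln v1 + ln v2)))
          (ln a1 + ln a2 + (L + ln v1 + ln v2) - r1))"
    have Fle: "ereal (F v1 v2) \<le> I v1 v2" for v1 v2 unfolding F_def I Let_def
      by (rule polyval_ge) auto
    have lim: "(\<lambda>n. F (s1 * t n) (s2 * t n)) \<longlonglongrightarrow> F (s1 * 1) (s2 * 1)"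
      unfolding F_def Let_def
      by (intro tendsto_intros t) (use vf1 vf2 in auto)
    have FV: "F (s1 * 1) (s2 * 1) = Vb"
    proof -
      have m1: "min (ln (a1 + P1/b1*(1-s1))) (ln a1 + (L + ln s1 + ln s2)) = ln a1 + ln lam1 + ln s1"
        using feas(1) I1s by linarith
      have m2: "min (min (ln (a2 + P2/b2*(1-s2))) (ln a2 + (L + ln s1 + ln s2))) (ln a1 + ln a2 + (L + ln s1 + ln s2) - (ln a1 + ln lam1 + ln s1)) = ln a2 + ln lam2 + ln s2"
        using feas(2,3) I3s by linarith
      show ?thesis unfolding F_def Let_def mult_1_right m1 m2 Vb ..
    qed
    have "ereal (F (s1 * t n) (s2 * t n)) \<le> S" for n
    proof -
      have "0 < s1 * t n" "s1 * t n < 1" "0 < s2 * t n" "s2 * t n < 1"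
      proof -
        have a: "s1 * t n \<le> t n" by (rule mult_left_le_one_le) (use t01[of n] vf1(1,2) in auto)
        have b: "s2 * t n \<le> t n" by (rule mult_left_le_one_le) (use t01[of n] vf2(1,2) in auto)
        show "0 < s1 * t n" "0 < s2 * t n" using t01[of n] vf1(1) vf2(1) by auto
        show "s1 * t n < 1" using a t01[of n] by linarith
        show "s2 * t n < 1" using b t01[of n] by linarith
      qed
      then show ?thesis using Fle[of "s1 * t n" "s2 * t n"] H by (meson order_trans)
    qed
    then show ?thesis using LIMSEQ_le_const2[OF tendsto_ereal[OF lim]] FV by auto
  qed
qed

lemma quad:
  fixes A B C lamo :: real
  assumes A: "A > 0" and C: "C \<le> 0" and lo: "lamo = inverse (2*A) * (B + sqrt (B\<^sup>2 - 4*A*C))"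
  shows "A*lamo^2 - B*lamo + C = 0"
    and "\<And>x. 0 \<le> x \<Longrightarrow> lamo \<le> x \<Longrightarrow> A*x^2 - B*x + C \<ge> 0"
    and "\<And>x. 0 \<le> x \<Longrightarrow> x \<le> lamo \<Longrightarrow> A*x^2 - B*x + C \<le> 0"
proof -
  define d where "d = B\<^sup>2 - 4*A*C"
  define s where "s = sqrt d"
  have "A*C \<le> 0" using A C by (simp add: mult_nonneg_nonpos)
  then have d0: "d \<ge> B\<^sup>2" unfolding d_def by simp
  then have dn: "d \<ge> 0" by (smt (verit) zero_le_power2)
  have ss: "s^2 = d" unfolding s_def using dn by simp
  have sB: "s \<ge> B" unfolding s_def using d0 real_le_rsqrt by (smt (verit) real_sqrt_abs real_sqrt_le_mono abs_ge_self)
  define lamm where "lamm = inverse (2*A) * (B - s)"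
  have lm: "lamm \<le> 0" unfolding lamm_def using A sB by (simp add: mult_nonneg_nonpos)
  have lo': "lamo = inverse (2*A) * (B + s)" unfolding lo s_def d_def ..
  have fac: "A*x^2 - B*x + C = A*(x - lamo)*(x - lamm)" for x
  proof -
    have Ceq: "C = (B^2 - s^2)/(4*A)" unfolding ss d_def using A by (simp add: field_simps)
    show ?thesis unfolding lo' lamm_def by (subst Ceq) (use A in \<open>simp add: field_simps power2_eq_square\<close>)
  qed
  show "A*lamo^2 - B*lamo + C = 0" unfolding fac by simp
  show "A*x^2 - B*x + C \<ge> 0" if "0 \<le> x" "lamo \<le> x" for x
    unfolding fac using that lm A by (simp add: mult_nonneg_nonneg)
  show "A*x^2 - B*x + C \<le> 0" if "0 \<le> x" "x \<le> lamo" for x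
  proof -
    have "(x - lamo)*(x - lamm) \<le> 0" using that lm by (simp add: mult_nonpos_nonneg)
    then show ?thesis unfolding fac using A by (simp add: mult_nonneg_nonpos mult.assoc)
  qed
qed

lemma div_helper:
  fixes X Y b :: real
  assumes "X > 0" "Y > 0" "b > 0"
  shows "Y/X / (b + Y/X) = Y/(b*X + Y)"
  using assms by (simp add: field_simps)

lemma Qstar_facts:
  fixes M N :: nat
  assumes a: "a > 0" and b: "b > 0" and P: "P > 0" and lam: "lam \<ge> 1"
    and ad: "a = 1 + P * (real M - real N) / dd powr \<alpha>" and bd: "b = dr powr \<alpha> / real N"
  shows "goodQ (Q_star M N P dd dr \<alpha> lam)"
    and "vq b (Q_star M N P dd dr \<alpha> lam) = (P + b*a)/(P + b*a*lam)"
proof -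
  have eq: "Q_star M N P dd dr \<alpha> lam = (if lam = 1 then \<infinity> else ereal ((b*a + P)/(a*(lam-1))))"
    unfolding Q_star_def Let_def ad[symmetric] bd[symmetric] ..
  have ba: "b*a > 0" using a b by simp
  show "goodQ (Q_star M N P dd dr \<alpha> lam)"
  proof (cases "lam = 1")
    case False
    then have "lam - 1 > 0" using lam by simp
    then have "(b*a + P)/(a*(lam-1)) > 0" using ba P a by simp
    then show ?thesis unfolding eq goodQ_def using False by auto
  next
    case True
    show ?thesis unfolding eq goodQ_def using True by simp
  qed
  show "vq b (Q_star M N P dd dr \<alpha> lam) = (P + b*a)/(P + b*a*lam)"
  proof (cases "lam = 1")
    case True
    then show ?thesis unfolding eq vq_def using ba P by simp
  next
    case False
    then have l: "lam - 1 > 0" using lam by simp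
    have X: "a*(lam-1) > 0" using l a by simp
    have q: "(b*a+P)/(a*(lam-1)) > 0" using X ba P by simp
    have "(b*a+P)/(a*(lam-1)) / (b + (b*a+P)/(a*(lam-1))) = (b*a+P)/(b*(a*(lam-1)) + (b*a+P))"
      using X b ba P by (intro div_helper) auto
    also have "b*(a*(lam-1)) + (b*a+P) = P + b*a*lam" by (simp add: algebra_simps)
    finally show ?thesis unfolding eq vq_def using False by (simp add: add.commute)
  qed
qed

theorem theorem2:
  fixes M N :: nat
    and P1 P2 Pr dd1 dd2 dr1 dr2 ddr \<alpha> \<mu>1 :: real
  assumes "1 \<le> N" and "N < M"
    and "0 < P1" and "0 < P2" and "0 < Pr"
    and "0 < dd1" and "0 < dd2" and "0 < dr1" and "0 < dr2" and "0 < ddr" and "0 < \<alpha>"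
    and "0 \<le> \<mu>1" and "\<mu>1 \<le> 1"
  shows "(let lam1 = lambda1_star M N P1 P2 Pr dd1 dd2 dr1 dr2 ddr \<alpha> \<mu>1;
              lam2 = lambda_s M N Pr ddr \<alpha> / lam1
          in qf_value M N P1 P2 Pr dd1 dd2 dr1 dr2 ddr \<alpha> \<mu>1
               (Q_star M N P1 dd1 dr1 \<alpha> lam1) (Q_star M N P2 dd2 dr2 \<alpha> lam2))
       = (SUP Q \<in> {0<..} \<times> {0<..}.
            qf_value M N P1 P2 Pr dd1 dd2 dr1 dr2 ddr \<alpha> \<mu>1 (ereal (fst Q)) (ereal (snd Q)))"
proof -
  note as = assms
  define a1 where "a1 = 1 + P1 * (real M - real N) / dd1 powr \<alpha>"
  define a2 where "a2 = 1 + P2 * (real M - real N) / dd2 powr \<alpha>"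
  define b1 where "b1 = dr1 powr \<alpha> / real N"
  define b2 where "b2 = dr2 powr \<alpha> / real N"
  define base where "base = 1 + Pr * (real M - real N) / (real N * ddr powr \<alpha>)"
  define lams where "lams = base ^ N"
  define L where "L = real N * Cf (Pr * (real M - real N) / (real N * ddr powr \<alpha>))"
  define A where "A = (1-\<mu>1) * P2 * (dr1 powr \<alpha> / real N) * a1"
  define B where "B = (\<mu>1 - (1-\<mu>1)) * P1 * P2"
  define C where "C = - \<mu>1 * P1 * (dr2 powr \<alpha> / real N) * a2 * lams"
  define lamo where "lamo = inverse (2*A) * (B + sqrt (B\<^sup>2 - 4*A*C))"
  define lam1 where "lam1 = lambda1_star M N P1 P2 Pr dd1 dd2 dr1 dr2 ddr \<alpha> \<mu>1"
  define lam2 where "lam2 = lambda_s M N Pr ddr \<alpha> / lam1"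
  have lam1_eq: "lam1 = (if A = 0 then lams else min (max lamo 1) lams)"
    unfolding lam1_def lambda1_star_def Let_def A_def B_def C_def lamo_def lams_def base_def a1_def a2_def
    by simp
  have lams_eq: "lambda_s M N Pr ddr \<alpha> = lams" unfolding lambda_s_def lams_def base_def by simp
  have K: "real M - real N > 0" using as(2) by simp
  have Nr: "real N \<ge> 1" using as(1) by simp
  have pw: "dd1 powr \<alpha> > 0" "dd2 powr \<alpha> > 0" "dr1 powr \<alpha> > 0" "dr2 powr \<alpha> > 0" "ddr powr \<alpha> > 0"
    using as by auto
  have a1: "a1 > 0" unfolding a1_def using as(3) K pw by (simp add: add_pos_pos)
  have a2: "a2 > 0" unfolding a2_def using as(4) K pw by (simp add: add_pos_pos)
  have b1: "b1 > 0" unfolding b1_def using pw Nr by simp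
  have b2: "b2 > 0" unfolding b2_def using pw Nr by simp
  have base: "base > 1" unfolding base_def using as(5) K pw Nr by simp
  have lams: "lams > 1" unfolding lams_def using base as(1) by (simp add: one_less_power)
  have L: "L = ln lams" unfolding L_def lams_def Cf_def base_def using base[unfolded base_def]
    by (simp add: ln_realpow)
  have A_eq: "A = (1-\<mu>1) * P2 * b1 * a1" unfolding A_def b1_def ..
  have C_eq: "C = - \<mu>1 * P1 * b2 * a2 * lams" unfolding C_def b2_def ..
  have A0: "A \<ge> 0" unfolding A_eq using as a1 b1 by simp
  have C0: "C \<le> 0" unfolding C_eq using as a2 b2 lams by (simp add: mult_nonneg_nonneg)
  have lam1b: "1 \<le> lam1" "lam1 \<le> lams" unfolding lam1_eq using lams by auto
  have lam1p: "lam1 > 0" using lam1b by simp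
  have lam2_eq: "lam2 = lams / lam1" unfolding lam2_def lams_eq ..
  have lam2b: "lam2 \<ge> 1" unfolding lam2_eq using lam1b lam1p by simp
  have prod: "lam1 * lam2 = lams" unfolding lam2_eq using lam1p by simp
  have Lsum: "L = ln lam1 + ln lam2" unfolding L prod[symmetric] using lam1p lam2b by (simp add: ln_mult)
  have qx: "A*x^2 - B*x + C = x*(1-\<mu>1)*P2*(P1 + b1*a1*x) - \<mu>1*P1*(P2*x + b2*a2*lams)" for x
    unfolding A_eq C_eq B_def by (simp add: algebra_simps power2_eq_square)
  have mu2: "1 - \<mu>1 \<ge> 0" using as(13) by simp
  have cert: "\<exists>y1 y2 y3 y4 y5. cert a1 a2 b1 b2 P1 P2 lam1 lam2 \<mu>1 (1-\<mu>1) y1 y2 y3 y4 y5"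
  proof (cases "A = 0")
    case True
    then have "1 - \<mu>1 = 0" unfolding A_eq using as(4) a1 b1 by simp
    moreover have l1: "lam1 = lams" using True lam1_eq by simp
    moreover have "lam2 = 1" unfolding lam2_eq l1 using lams by simp
    moreover have "0 \<le> \<mu>1 * P1 * (P2 + b2*a2)" using as(12) as(3) as(4) a2 b2 by simp
    ultimately show ?thesis using cert_edge2[OF a1 a2 b1 b2 as(3) as(4) lam1b(1) _ as(12) mu2] by simp
  next
    case False
    then have Ap: "A > 0" using A0 by simp
    note Q = quad[OF Ap C0 lamo_def]
    consider "lamo \<le> 1" | "lams \<le> lamo" | "1 < lamo" "lamo < lams" by linarith
    then show ?thesis
    proof cases
      case 1
      have l1: "lam1 = 1" using False lam1_eq 1 lams by simp
      have l2: "lam2 = lams" unfolding lam2_eq l1 by simp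
      have "A*1^2 - B*1 + C \<ge> 0" by (rule Q(2)) (use 1 in auto)
      then have "\<mu>1 * P1 * (P2 + b2*a2*lam2) \<le> (1-\<mu>1) * P2 * (P1 + b1*a1)"
        unfolding qx l2 by (simp add: algebra_simps)
      then show ?thesis using cert_edge1[OF a1 a2 b1 b2 as(3) as(4) l1 lam2b as(12) mu2] by simp
    next
      case 2
      have l1: "lam1 = lams" using False lam1_eq 2 lams by simp
      have l2: "lam2 = 1" unfolding lam2_eq l1 using lams by simp
      have "A*lams^2 - B*lams + C \<le> 0" by (rule Q(3)) (use 2 lams in auto)
      then have "lams * ((1-\<mu>1) * P2 * (P1 + b1*a1*lams) - \<mu>1 * P1 * (P2 + b2*a2)) \<le> 0"
        unfolding qx by (simp add: algebra_simps)
      then have "(1-\<mu>1) * P2 * (P1 + b1*a1*lam1) \<le> \<mu>1 * P1 * (P2 + b2*a2)"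
        unfolding l1 using lams by (simp add: mult_le_0_iff)
      then show ?thesis using cert_edge2[OF a1 a2 b1 b2 as(3) as(4) lam1b(1) l2 as(12) mu2] by simp
    next
      case 3
      have l1: "lam1 = lamo" using False lam1_eq 3 by simp
      have "A*lamo^2 - B*lamo + C = 0" by (rule Q(1))
      then have h0: "lamo*(1-\<mu>1)*P2*(P1 + b1*a1*lamo) - \<mu>1*P1*(P2*lamo + b2*a2*lams) = 0"
        unfolding qx .
      have "lam1*(1-\<mu>1)*P2*(P1 + b1*a1*lam1) - \<mu>1*P1*(P2*lam1 + b2*a2*(lam1*lam2)) = 0"
        by (subst prod) (use h0 l1 in simp)
      then have "lam1 * ((1-\<mu>1) * P2 * (P1 + b1*a1*lam1)) = \<mu>1*P1*(P2*lam1 + b2*a2*(lam1*lam2))"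
        by (simp add: algebra_simps)
      also have "\<dots> = lam1 * (\<mu>1*P1*(P2 + b2*a2*lam2))" by (simp add: algebra_simps)
      finally have "\<mu>1 * P1 * (P2 + b2*a2*lam2) = (1-\<mu>1) * P2 * (P1 + b1*a1*lam1)"
        using lam1p by simp
      then show ?thesis using cert_interior[OF a1 a2 b1 b2 as(3) as(4) lam1b(1) lam2b as(12) mu2] by simp
    qed
  qed
  then obtain y1 y2 y3 y4 y5 where ct: "cert a1 a2 b1 b2 P1 P2 lam1 lam2 \<mu>1 (1-\<mu>1) y1 y2 y3 y4 y5"
    by blast
  define s1 where "s1 = (P1+b1*a1)/(P1+b1*a1*lam1)"
  define s2 where "s2 = (P2+b2*a2)/(P2+b2*a2*lam2)"
  define Vb where "Vb = \<mu>1*(ln a1 + ln lam1 + ln s1) + (1-\<mu>1)*(ln a2 + ln lam2 + ln s2)"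
  define I where "I = (\<lambda>v1 v2. polyval \<mu>1 (ln (a1 + P1/b1*(1-v1))) (ln a1 + (L + ln v1 + ln v2))
      (ln (a2 + P2/b2*(1-v2))) (ln a2 + (L + ln v1 + ln v2))
      (ln a1 + ln a2 + (L + ln v1 + ln v2)))"
  note AM = abstract_main[OF a1 a2 b1 b2 as(3) as(4) lam1b(1) lam2b Lsum as(12) as(13) ct s1_def s2_def Vb_def I_def]
  have qv: "qf_value M N P1 P2 Pr dd1 dd2 dr1 dr2 ddr \<alpha> \<mu>1 Q1 Q2 = I (vq b1 Q1) (vq b2 Q2)"
    if "goodQ Q1" "goodQ Q2" for Q1 Q2
    unfolding I_def by (rule qf_value_v[OF as(1) as(8) as(9) that a1_def a2_def b1_def b2_def L_def]) auto
  have Q1: "goodQ (Q_star M N P1 dd1 dr1 \<alpha> lam1)" "vq b1 (Q_star M N P1 dd1 dr1 \<alpha> lam1) = s1"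
    using Qstar_facts[OF a1 b1 as(3) lam1b(1) a1_def b1_def] unfolding s1_def by auto
  have Q2: "goodQ (Q_star M N P2 dd2 dr2 \<alpha> lam2)" "vq b2 (Q_star M N P2 dd2 dr2 \<alpha> lam2) = s2"
    using Qstar_facts[OF a2 b2 as(4) lam2b a2_def b2_def] unfolding s2_def by auto
  have LHS: "qf_value M N P1 P2 Pr dd1 dd2 dr1 dr2 ddr \<alpha> \<mu>1
               (Q_star M N P1 dd1 dr1 \<alpha> lam1) (Q_star M N P2 dd2 dr2 \<alpha> lam2) = ereal Vb"
    using qv[OF Q1(1) Q2(1)] Q1(2) Q2(2) AM(2) by simp
  define RHS where "RHS = (SUP Q \<in> {0<..} \<times> {0<..}.
            qf_value M N P1 P2 Pr dd1 dd2 dr1 dr2 ddr \<alpha> \<mu>1 (ereal (fst Q)) (ereal (snd Q)))"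
  have "RHS \<le> ereal Vb" unfolding RHS_def
  proof (rule SUP_least)
    fix Q :: "real \<times> real" assume "Q \<in> {0<..} \<times> {0<..}"
    then have g: "goodQ (ereal (fst Q))" "goodQ (ereal (snd Q))" unfolding goodQ_def by auto
    show "qf_value M N P1 P2 Pr dd1 dd2 dr1 dr2 ddr \<alpha> \<mu>1 (ereal (fst Q)) (ereal (snd Q)) \<le> ereal Vb"
      unfolding qv[OF g] using vq_bounds[OF b1 g(1)] vq_bounds[OF b2 g(2)] AM(1) by auto
  qed
  moreover have "ereal Vb \<le> RHS"
  proof (rule AM(3))
    fix v1 v2 :: real assume v: "0 < v1" "v1 < 1" "0 < v2" "v2 < 1"
    define q1 where "q1 = b1 * v1 / (1 - v1)"
    define q2 where "q2 = b2 * v2 / (1 - v2)"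
    have q: "q1 > 0" "q2 > 0" unfolding q1_def q2_def using v b1 b2 by auto
    have g: "goodQ (ereal q1)" "goodQ (ereal q2)" using q unfolding goodQ_def by auto
    have vq1: "vq b1 (ereal q1) = v1" unfolding vq_def q1_def using v b1 by (simp add: field_simps)
    have vq2: "vq b2 (ereal q2) = v2" unfolding vq_def q2_def using v b2 by (simp add: field_simps)
    have "I v1 v2 = qf_value M N P1 P2 Pr dd1 dd2 dr1 dr2 ddr \<alpha> \<mu>1 (ereal (fst (q1,q2))) (ereal (snd (q1,q2)))"
      using qv[OF g] vq1 vq2 by simp
    also have "\<dots> \<le> RHS" unfolding RHS_def by (rule SUP_upper) (use q in auto)
    finally show "I v1 v2 \<le> RHS" .
  qed
  ultimately have "RHS = ereal Vb" by simp
  then show ?thesis unfolding Let_def lam1_def[symmetric] lam2_def[symmetric] LHS RHS_def by simp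
qed

end
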